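(* Let $G$ be a digraph and $f$ a discrete Morse function on $G$. If $v_0v_1\cdots v_nv_0$ ($n\ge1$) is a directed loop in $G$, then $f(v_i)>0$ for every $0\le i\le n$.
   Context: A digraph $G=(V,E)$ consists of a set $V$ and $E\subseteq(V\times V)\setminus\{(v,v)\}$; $(u,v)\in E$ is written $u\to v$. An allowed elementary $n$-path is a sequence $v_0\cdots v_n$ of vertices with $v_{i-1}\to v_i\in E$ for $1\le i\le n$. A directed loop is an allowed elementary path of the form $v_0v_1\cdots v_nv_0$ with $n\ge1$. A map $f:V\to[0,+\infty)$ is a discrete Morse function on $G$ if for every allowed elementary path $v_0\cdots v_n$: (i) there is at most one index $0\le i\le n$ with $f(v_i)=0$ such that $v_0\cdots v_{i-1}v_{i+1}\cdots v_n$ is an allowed elementary $(n-1)$-path; (ii) there is at most one vertex $u$ with $f(u)=0$ such that for some $-1\le j\le n$ the sequence $v_0\cdots v_juv_{j+1}\cdots v_n$ (meaning $uv_0\cdots v_n$ if $j=-1$, $v_0\cdots v_nu$ if $j=n$) is an allowed elementary $(n+1)$-path. *)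

theory Defs
  imports Complex_Main
begin

definition digraph :: "'a set \<Rightarrow> ('a \<times> 'a) set \<Rightarrow> bool" where
  "digraph V E \<longleftrightarrow> E \<subseteq> (V \<times> V) - {(v,v) | v. True}"

(* An allowed elementary n-path v_0 ... v_n is represented by the list [v_0,...,v_n]
   (length n+1, n >= 0) of vertices with v_{i-1} -> v_i in E. *)
definition allowed_path :: "'a set \<Rightarrow> ('a \<times> 'a) set \<Rightarrow> 'a list \<Rightarrow> bool" where
  "allowed_path V E vs \<longleftrightarrow> vs \<noteq> [] \<and> set vs \<subseteq> V \<and>
     (\<forall>i. Suc i < length vs \<longrightarrow> (vs ! i, vs ! Suc i) \<in> E)"

definition directed_loop :: "'a set \<Rightarrow> ('a \<times> 'a) set \<Rightarrow> 'a list \<Rightarrow> bool" where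
  "directed_loop V E vs \<longleftrightarrow> length vs \<ge> 2 \<and> allowed_path V E (vs @ [hd vs])"

definition discrete_morse :: "'a set \<Rightarrow> ('a \<times> 'a) set \<Rightarrow> ('a \<Rightarrow> real) \<Rightarrow> bool" where
  "discrete_morse V E f \<longleftrightarrow>
     (\<forall>v\<in>V. f v \<ge> 0) \<and>
     (\<forall>vs. allowed_path V E vs \<longrightarrow>
        \<comment> \<open>(i) at most one index i with f(v_i)=0 whose deletion is allowed\<close>
        (\<forall>i j. i < length vs \<and> f (vs ! i) = 0 \<and> allowed_path V E (take i vs @ drop (Suc i) vs) \<and>
               j < length vs \<and> f (vs ! j) = 0 \<and> allowed_path V E (take j vs @ drop (Suc j) vs)
               \<longrightarrow> i = j) \<and>
        \<comment> \<open>(ii) at most one vertex u with f(u)=0 whose insertion (at any position) is allowed\<close>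
        (\<forall>u w. u \<in> V \<and> f u = 0 \<and> (\<exists>k \<le> length vs. allowed_path V E (take k vs @ u # drop k vs)) \<and>
               w \<in> V \<and> f w = 0 \<and> (\<exists>k \<le> length vs. allowed_path V E (take k vs @ w # drop k vs))
               \<longrightarrow> u = w))"

end

theory Submission
  imports Defs
begin

lemma loop_edge:
  assumes "directed_loop V E vs"
  shows "(vs ! (j mod length vs), vs ! (Suc j mod length vs)) \<in> E"
proof -
  let ?m = "length vs"
  have m2: "?m \<ge> 2" and ap: "allowed_path V E (vs @ [hd vs])"
    using assms unfolding directed_loop_def by auto
  have ed: "\<And>r. Suc r < Suc ?m \<Longrightarrow> ((vs @ [hd vs]) ! r, (vs @ [hd vs]) ! Suc r) \<in> E"
    using ap unfolding allowed_path_def by auto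
  define r where "r = j mod ?m"
  have r: "r < ?m" using m2 r_def by (metis mod_less_divisor gr0I not_numeral_le_zero)
  show ?thesis
  proof (cases "Suc r < ?m")
    case True
    have "Suc j mod ?m = Suc r" using True r_def by (simp add: mod_Suc)
    moreover have "((vs @ [hd vs]) ! r, (vs @ [hd vs]) ! Suc r) \<in> E" using ed True by simp
    ultimately show ?thesis using True r_def by (simp add: nth_append)
  next
    case False
    hence s: "Suc r = ?m" using r by simp
    have "Suc j mod ?m = 0" using s r_def by (simp add: mod_Suc)
    moreover have "((vs @ [hd vs]) ! r, (vs @ [hd vs]) ! Suc r) \<in> E" using ed[of r] r by simp
    moreover have "(vs @ [hd vs]) ! Suc r = hd vs" using s by (metis nth_append_length)
    moreover have ne: "vs \<noteq> []" using m2 by auto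
    ultimately show ?thesis using s r r_def m2
      by (simp add: nth_append hd_conv_nth[OF ne])
  qed
qed

lemma cyc_path:
  assumes "directed_loop V E vs" and "len \<ge> 1"
  shows "allowed_path V E (map (\<lambda>k. vs ! ((s + k) mod length vs)) [0..<len])"
proof -
  have m2: "length vs \<ge> 2" and ap: "allowed_path V E (vs @ [hd vs])"
    using assms unfolding directed_loop_def by auto
  have sv: "set vs \<subseteq> V" using ap unfolding allowed_path_def by auto
  have "set (map (\<lambda>k. vs ! ((s + k) mod length vs)) [0..<len]) \<subseteq> V"
    using sv m2 by (auto intro!: nth_mem[THEN subsetD[OF sv]] mod_less_divisor)
  moreover have "\<forall>i. Suc i < len \<longrightarrow> (vs ! ((s + i) mod length vs), vs ! ((s + Suc i) mod length vs)) \<in> E"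
    using loop_edge[OF assms(1), of "s + _"] by simp
  ultimately show ?thesis using assms(2) unfolding allowed_path_def by auto
qed

theorem lemma4p1:
  fixes V :: "'a set" and E :: "('a \<times> 'a) set" and f :: "'a \<Rightarrow> real" and vs :: "'a list"
  assumes "digraph V E" and "discrete_morse V E f" and "directed_loop V E vs"
  shows "\<forall>i < length vs. f (vs ! i) > 0"
proof (rule ccontr)
  let ?m = "length vs"
  assume "\<not> ?thesis"
  then obtain i where i: "i < ?m" and le: "f (vs ! i) \<le> 0" by auto
  have m2: "?m \<ge> 2" and ap: "allowed_path V E (vs @ [hd vs])"
    using assms(3) unfolding directed_loop_def by auto
  have sv: "set vs \<subseteq> V" using ap unfolding allowed_path_def by auto
  have "vs ! i \<in> V" using sv i by (meson nth_mem subsetD)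
  hence "f (vs ! i) \<ge> 0" using assms(2) unfolding discrete_morse_def by blast
  with le have f0: "f (vs ! i) = 0" by simp
  define P where "P = map (\<lambda>k. vs ! ((i + k) mod ?m)) [0..<Suc ?m]"
  have PP: "allowed_path V E P" unfolding P_def by (rule cyc_path[OF assms(3)]) simp
  have d0: "take 0 P @ drop (Suc 0) P = map (\<lambda>k. vs ! ((Suc i + k) mod ?m)) [0..<?m]"
    unfolding P_def by (rule nth_equalityI) (auto simp del: upt_Suc simp: algebra_simps)
  have dm: "take ?m P @ drop (Suc ?m) P = map (\<lambda>k. vs ! ((i + k) mod ?m)) [0..<?m]"
    unfolding P_def by (rule nth_equalityI) (auto simp: nth_append)
  have a0: "allowed_path V E (take 0 P @ drop (Suc 0) P)"
    unfolding d0 by (rule cyc_path[OF assms(3)]) (use m2 in simp)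
  have am: "allowed_path V E (take ?m P @ drop (Suc ?m) P)"
    unfolding dm by (rule cyc_path[OF assms(3)]) (use m2 in simp)
  have p0: "P ! 0 = vs ! i" unfolding P_def using i by (simp add: nth_append)
  have pm: "P ! ?m = vs ! i" unfolding P_def using i by (simp add: nth_append)
  have lP: "length P = Suc ?m" unfolding P_def by simp
  have "0 = ?m"
    using assms(2) PP a0 am p0 pm lP f0 unfolding discrete_morse_def
    by (metis lessI zero_less_Suc)
  with m2 show False by simp
qed

end
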